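(* Let $p$ be an odd prime and let $s$ be an integer with $0\le s\le \frac{p-1}{2}$. Then, modulo $[p]^2$, $$\sum_{k=0}^{\frac{p-1}{2}} \begin{bmatrix}2k\\k\end{bmatrix}_{q^2}^2 \begin{bmatrix}2k\\k+s\end{bmatrix}_{q^2} \frac{q^{2k}}{(-q^2;q^2)_k^2\,(-q;q)_{2k}^2} \equiv \begin{cases} (-1)^s q^{\frac{p-1}{2}-s^2} \begin{bmatrix}\frac{p-1}{2}\\ \frac{p-2s-1}{4}\end{bmatrix}_{q^4}^2 \dfrac{(q^2;q^2)_{\frac{p-2s-1}{2}}\,(q^2;q^2)_{\frac{p+2s-1}{2}}}{(q^4;q^4)_{\frac{p-1}{2}}^2}, & \text{if } s\equiv \frac{p-1}{2}\pmod 2,\\[2mm] 0, & \text{otherwise.}\end{cases}$$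
   Context: For an indeterminate $q$ and an integer $n\ge 0$: $(a;q)_0=1$ and $(a;q)_n=(1-a)(1-aq)\cdots(1-aq^{n-1})$. The $q$-binomial coefficient is $\begin{bmatrix}n\\k\end{bmatrix}_q=\frac{(q^{n-k+1};q)_k}{(q;q)_k}$ if $0\le k\le n$ and $0$ otherwise; if no base is indicated, the base is $q$. For a positive integer $p$, $[p]=\frac{1-q^p}{1-q}=1+q+\cdots+q^{p-1}$. For a prime $p$, $[p]$ is irreducible in $\mathbb{Q}[q]$; for rational functions $A,B$ of $q$ whose denominators are coprime to $[p]$, $A\equiv B\pmod{[p]^r}$ means that $A-B$, written in lowest terms, has numerator divisible by $[p]^r$ in $\mathbb{Q}[q]$. *)

theory Defs
  imports "HOL-Computational_Algebra.Computational_Algebra"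
          "HOL-Computational_Algebra.Normalized_Fraction"
          "HOL-Computational_Algebra.Field_as_Ring"
begin

type_synonym ratfun = "rat poly fract"

definition qvar :: ratfun where
  "qvar = Fract [:0, 1:] 1"

definition qpoch :: "'a::field \<Rightarrow> 'a \<Rightarrow> nat \<Rightarrow> 'a" where
  "qpoch a x n = (\<Prod>i<n. (1 - a * x ^ i))"

definition qbinom :: "'a::field \<Rightarrow> nat \<Rightarrow> nat \<Rightarrow> 'a" where
  "qbinom x n k = (if k \<le> n then qpoch (x ^ (n - k + 1)) x k / qpoch x x k else 0)"

definition qint :: "nat \<Rightarrow> rat poly" where
  "qint p = (\<Sum>i<p. monom 1 i)"

definition qcong :: "ratfun \<Rightarrow> ratfun \<Rightarrow> rat poly \<Rightarrow> nat \<Rightarrow> bool" where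
  "qcong A B m r \<longleftrightarrow> m ^ r dvd fst (quot_of_fract (A - B))"

end

theory Submission
  imports Defs
begin

definition gen :: "'a::field \<Rightarrow> bool" where
  "gen q \<longleftrightarrow> q \<noteq> 0 \<and> (\<forall>j>0. q ^ j \<noteq> 1)"

lemma gen_nz: "gen q \<Longrightarrow> q \<noteq> 0" by (simp add: gen_def)
lemma gen_ne1: "gen q \<Longrightarrow> 0 < j \<Longrightarrow> q ^ j \<noteq> 1" by (simp add: gen_def)
lemma gen_ne1': "gen q \<Longrightarrow> 0 < j \<Longrightarrow> 1 - q ^ j \<noteq> 0" by (simp add: gen_def)
lemma gen_pow: "gen q \<Longrightarrow> 0 < m \<Longrightarrow> gen (q ^ m)"
  unfolding gen_def by (auto simp: power_mult[symmetric])

lemma qpoch_0[simp]: "qpoch a x 0 = 1" by (simp add: qpoch_def)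
lemma qpoch_Suc: "qpoch a x (Suc n) = qpoch a x n * (1 - a * x ^ n)"
  by (simp add: qpoch_def)

lemma qpoch_add: "qpoch x x (m + n) = qpoch x x m * qpoch (x ^ (m + 1)) x n"
  by (induction n) (simp_all add: qpoch_Suc power_add algebra_simps)

lemma qpoch_nz: "gen x \<Longrightarrow> qpoch x x n \<noteq> 0"
proof (induction n)
  case (Suc n)
  have "1 - x * x ^ n \<noteq> 0" using gen_ne1'[OF Suc.prems, of "Suc n"] by simp
  then show ?case using Suc by (simp add: qpoch_Suc)
qed simp

lemma qpoch_Suc_self: "qpoch x x (Suc n) = qpoch x x n * (1 - x ^ Suc n)"
  by (simp add: qpoch_Suc)

lemma qbinom_fq: assumes "gen x" "m \<le> N"
  shows "qbinom x N m = qpoch x x N / (qpoch x x m * qpoch x x (N - m))"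
proof -
  have "qpoch x x N = qpoch x x (N - m) * qpoch (x ^ (N - m + 1)) x m"
    using qpoch_add[of x "N - m" m] assms by simp
  then show ?thesis using assms qpoch_nz[OF assms(1)]
    by (simp add: qbinom_def field_simps)
qed

lemma qbinom_zero: "N < m \<Longrightarrow> qbinom x N m = 0" by (simp add: qbinom_def)
lemma qbinom_self: "gen x \<Longrightarrow> qbinom x N N = 1"
  using qpoch_nz[of x N] by (simp add: qbinom_def)
lemma qbinom_0: "qbinom x N 0 = 1" by (simp add: qbinom_def)

lemma qbinom_s_step:
  assumes g: "gen x"
  shows "qbinom x (2*k) (k+s+1) * (x^s * (1 - x^(k+s+1))) = qbinom x (2*k) (k+s) * (x^s - x^k)"
proof (cases "s < k")
  case True
  have nz: "\<And>n. qpoch x x n \<noteq> 0" using qpoch_nz[OF g] .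
  have b1: "qbinom x (2*k) (k+s+1) = qpoch x x (2*k) / (qpoch x x (k+s) * (1 - x^(k+s+1)) * qpoch x x (k-s-1))"
  proof -
    have "qbinom x (2*k) (k+s+1) = qpoch x x (2*k) / (qpoch x x (k+s+1) * qpoch x x (2*k-(k+s+1)))"
      by (rule qbinom_fq[OF g]) (use True in simp)
    moreover have "qpoch x x (k+s+1) = qpoch x x (k+s) * (1 - x^(k+s+1))"
      using qpoch_Suc_self[of x "k+s"] by simp
    moreover have "2*k-(k+s+1) = k-s-1" by simp
    ultimately show ?thesis by simp
  qed
  have b2: "qbinom x (2*k) (k+s) = qpoch x x (2*k) / (qpoch x x (k+s) * (qpoch x x (k-s-1) * (1 - x^(k-s))))"
  proof -
    have "qbinom x (2*k) (k+s) = qpoch x x (2*k) / (qpoch x x (k+s) * qpoch x x (2*k-(k+s)))"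
      by (rule qbinom_fq[OF g]) (use True in simp)
    moreover have "qpoch x x (2*k-(k+s)) = qpoch x x (k-s-1) * (1 - x^(k-s))"
      using qpoch_Suc_self[of x "k-s-1"] True by (simp add: Suc_diff_Suc)
    ultimately show ?thesis by simp
  qed
  have e3: "x^s - x^k = x^s * (1 - x^(k-s))"
    using True by (simp add: algebra_simps power_add[symmetric])
  have ne: "1 - x^(k+s+1) \<noteq> 0" "1 - x^(k-s) \<noteq> 0"
    by (rule gen_ne1'[OF g]; use True in simp)+
  have gen: "\<And>N A B u v c::'a. A\<noteq>0 \<Longrightarrow> B\<noteq>0 \<Longrightarrow> u\<noteq>0 \<Longrightarrow> v\<noteq>0 \<Longrightarrow>
     N/(A*u*B)*(c*u) = N/(A*(B*v))*(c*v)" by (simp add: field_simps)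
  show ?thesis unfolding b1 b2 e3 by (rule gen) (use nz ne in auto)
next
  case False
  then show ?thesis
  proof (cases "s = k")
    case True then show ?thesis by (simp add: qbinom_zero)
  next
    case False
    with \<open>\<not> s < k\<close> show ?thesis by (simp add: qbinom_zero)
  qed
qed

lemma qbinom_k_step:
  assumes g: "gen x" and sk: "s \<le> k"
  shows "qbinom x (2*(k+1)) (k+1+s) * ((1 - x^(k+s+1)) * (x^s - x^(k+1)))
       = qbinom x (2*k) (k+s) * ((1 - x^(2*k+1)) * (1 - x^(2*k+2)) * x^s)"
proof -
  have nz: "\<And>n. qpoch x x n \<noteq> 0" using qpoch_nz[OF g] .
  have b1: "qbinom x (2*(k+1)) (k+1+s) = (qpoch x x (2*k) * (1 - x^(2*k+1)) * (1 - x^(2*k+2)))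
       / ((qpoch x x (k+s) * (1 - x^(k+s+1))) * (qpoch x x (k-s) * (1 - x^(k+1-s))))"
  proof -
    have "qbinom x (2*(k+1)) (k+1+s) = qpoch x x (2*(k+1)) / (qpoch x x (k+1+s) * qpoch x x (2*(k+1)-(k+1+s)))"
      by (rule qbinom_fq[OF g]) (use sk in simp)
    moreover have "qpoch x x (2*(k+1)) = qpoch x x (2*k) * (1 - x^(2*k+1)) * (1 - x^(2*k+2))"
      using qpoch_Suc_self[of x "2*k+1"] qpoch_Suc_self[of x "2*k"] by simp
    moreover have "qpoch x x (k+1+s) = qpoch x x (k+s) * (1 - x^(k+s+1))"
      using qpoch_Suc_self[of x "k+s"] by simp
    moreover have "qpoch x x (2*(k+1)-(k+1+s)) = qpoch x x (k-s) * (1 - x^(k+1-s))"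
      using qpoch_Suc_self[of x "k-s"] sk by (simp add: Suc_diff_le)
    ultimately show ?thesis by simp
  qed
  have b2: "qbinom x (2*k) (k+s) = qpoch x x (2*k) / (qpoch x x (k+s) * qpoch x x (k-s))"
  proof -
    have "qbinom x (2*k) (k+s) = qpoch x x (2*k) / (qpoch x x (k+s) * qpoch x x (2*k-(k+s)))"
      by (rule qbinom_fq[OF g]) (use sk in simp)
    moreover have "2*k-(k+s) = k-s" by simp
    ultimately show ?thesis by simp
  qed
  have e4: "x^s - x^(k+1) = x^s * (1 - x^(k+1-s))"
    using sk by (simp add: algebra_simps power_add[symmetric])
  have ne: "1 - x^(k+s+1) \<noteq> 0" "1 - x^(k+1-s) \<noteq> 0"
    by (rule gen_ne1'[OF g]; use sk in simp)+
  have gen: "\<And>N u1 u2 A B v w c::'a. A\<noteq>0 \<Longrightarrow> B\<noteq>0 \<Longrightarrow> v\<noteq>0 \<Longrightarrow> w\<noteq>0 \<Longrightarrow>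
     N*u1*u2/((A*v)*(B*w)) * (v*(c*w)) = N/(A*B) * (u1*u2*c)" by (simp add: field_simps)
  show ?thesis unfolding b1 b2 e4 by (rule gen) (use nz ne in auto)
qed

lemma qbinom_m_step:
  assumes g: "gen x" and m: "1 \<le> m" "m \<le> n"
  shows "qbinom x n m * (1 - x^m) = qbinom x n (m - 1) * (1 - x^(n - m + 1))"
proof -
  have nz: "\<And>n. qpoch x x n \<noteq> 0" using qpoch_nz[OF g] .
  have b1: "qbinom x n m = qpoch x x n / ((qpoch x x (m-1) * (1 - x^m)) * qpoch x x (n-m))"
  proof -
    have "qbinom x n m = qpoch x x n / (qpoch x x m * qpoch x x (n-m))" by (rule qbinom_fq[OF g m(2)])
    moreover have "qpoch x x m = qpoch x x (m-1) * (1 - x^m)"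
      using qpoch_Suc_self[of x "m-1"] m by simp
    ultimately show ?thesis by simp
  qed
  have b2: "qbinom x n (m-1) = qpoch x x n / (qpoch x x (m-1) * (qpoch x x (n-m) * (1 - x^(n-m+1))))"
  proof -
    have "qbinom x n (m-1) = qpoch x x n / (qpoch x x (m-1) * qpoch x x (n-(m-1)))"
      by (rule qbinom_fq[OF g]) (use m in simp)
    moreover have "qpoch x x (n - (m-1)) = qpoch x x (n-m) * (1 - x^(n-m+1))"
      using qpoch_Suc_self[of x "n-m"] m by (simp add: Suc_diff_le)
    ultimately show ?thesis by simp
  qed
  have ne: "1 - x^m \<noteq> 0" "1 - x^(n-m+1) \<noteq> 0"
    by (rule gen_ne1'[OF g]; use m in simp)+
  have gen: "\<And>N A B u v::'a. A\<noteq>0 \<Longrightarrow> B\<noteq>0 \<Longrightarrow> u\<noteq>0 \<Longrightarrow> v\<noteq>0 \<Longrightarrow>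
     N/((A*u)*B) * u = N/(A*(B*v)) * v" by (simp add: field_simps)
  show ?thesis unfolding b1 b2 by (rule gen) (use nz ne in auto)
qed

lemma cert_ideal:
  fixes Q a c x F0 F1 F2 F3 F' G0 G1 :: "'a::field"
  assumes nz: "Q \<noteq> 0" "a \<noteq> 0" "c \<noteq> 0"
    "1 - c*Q*x \<noteq> 0" "1 - c*Q^2*x \<noteq> 0" "1 - c*Q^3*x \<noteq> 0" "1 - Q^2*x^2 \<noteq> 0" "c - Q*x \<noteq> 0"
   and h1: "F1*(c*(1-c*Q*x)) = F0*(c-x)"
   and h2: "F2*(c*Q*(1-c*Q^2*x)) = F1*(c*Q-x)"
   and h3: "F3*(c*Q^2*(1-c*Q^3*x)) = F2*(c*Q^2-x)"
   and h4: "F'*(a*(1-Q^2*x^2)*(1-c*Q*x)*(c-Q*x)) = F0*(Q*(a-x)*(1-a*Q*x)*(1-Q*x^2)*c)"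
   and h5: "G0*(c*(1-c*Q*x)*(1-c*Q^2*x)) = a*((1-Q^2*c^2)*(1-Q^3*c^2)*(1-Q^4*c^2))*(x-c)*(1-x^2)*F0"
   and h6: "G1*(c*(1-c*Q^2*x)*(1-c*Q^3*x)) = a*((1-Q^2*c^2)*(1-Q^3*c^2)*(1-Q^4*c^2))*(Q*x-c)*(1-Q^2*x^2)*F'"
  shows "Q*(c-a)*(1-a*c*Q)*(1-Q^4*c^2)*F0
   + (1-Q^2*c^2)*(1-Q^2*c*a)*(a-Q*c)*F1
   - Q^2*c^2*(1-Q^4*c^2)*(1-a*c*Q^2)*(Q*c-a)*F2
   + Q^3*c^2*(1-Q^2*c^2)*(1-a*c*Q^3)*(Q^2*c-a)*F3 = G1 - G0"
proof -
  define T where "T = (1-Q^2*c^2)*(1-Q^3*c^2)*(1-Q^4*c^2)"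
  define D1 where "D1 = 1-c*Q*x"
  define D2 where "D2 = 1-c*Q^2*x"
  define D3 where "D3 = 1-c*Q^3*x"
  define E where "E = 1-Q^2*x^2"
  define Fc where "Fc = c-Q*x"
  define M where "M = c^3*Q^3*a*E*D1*D2*D3*Fc"
  have Mnz: "M \<noteq> 0" using nz unfolding M_def D1_def D2_def D3_def E_def Fc_def by simp
  note h1' = h1[folded D1_def] and h2' = h2[folded D2_def] and h3' = h3[folded D3_def]
  note h4' = h4[folded E_def D1_def Fc_def] and h5' = h5[folded T_def D1_def D2_def]
  note h6' = h6[folded T_def D2_def D3_def E_def]
  have m1: "M*F1 = (c^2*Q^3*a*E*D2*D3*Fc*(c-x))*F0"
  proof -
    have "M*F1 = (c^2*Q^3*a*E*D2*D3*Fc)*(F1*(c*D1))" unfolding M_def by algebra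
    also have "\<dots> = (c^2*Q^3*a*E*D2*D3*Fc)*(F0*(c-x))" by (simp only: h1')
    finally show ?thesis by algebra
  qed
  have m2: "M*F2 = (c*Q^2*a*E*D3*Fc*(c*Q-x)*(c-x))*F0"
  proof -
    have "M*F2 = (c^2*Q^2*a*E*D1*D3*Fc)*(F2*(c*Q*D2))" unfolding M_def by algebra
    also have "\<dots> = (c^2*Q^2*a*E*D1*D3*Fc)*(F1*(c*Q-x))" by (simp only: h2')
    also have "\<dots> = (c*Q^2*a*E*D3*Fc*(c*Q-x))*(F1*(c*D1))" by algebra
    also have "\<dots> = (c*Q^2*a*E*D3*Fc*(c*Q-x))*(F0*(c-x))" by (simp only: h1')
    finally show ?thesis by algebra
  qed
  have m3: "M*F3 = (a*E*Fc*(c*Q^2-x)*(c*Q-x)*(c-x))*F0"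
  proof -
    have "M*F3 = (c^2*Q*a*E*D1*D2*Fc)*(F3*(c*Q^2*D3))" unfolding M_def by algebra
    also have "\<dots> = (c^2*Q*a*E*D1*D2*Fc)*(F2*(c*Q^2-x))" by (simp only: h3')
    also have "\<dots> = (c*a*E*D1*Fc*(c*Q^2-x))*(F2*(c*Q*D2))" by algebra
    also have "\<dots> = (c*a*E*D1*Fc*(c*Q^2-x))*(F1*(c*Q-x))" by (simp only: h2')
    also have "\<dots> = (a*E*Fc*(c*Q^2-x)*(c*Q-x))*(F1*(c*D1))" by algebra
    also have "\<dots> = (a*E*Fc*(c*Q^2-x)*(c*Q-x))*(F0*(c-x))" by (simp only: h1')
    finally show ?thesis by algebra
  qed
  have m5: "M*G0 = (c^2*Q^3*a*E*D3*Fc*(a*T*(x-c)*(1-x^2)))*F0"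
  proof -
    have "M*G0 = (c^2*Q^3*a*E*D3*Fc)*(G0*(c*D1*D2))" unfolding M_def by algebra
    also have "\<dots> = (c^2*Q^3*a*E*D3*Fc)*(a*T*(x-c)*(1-x^2)*F0)" by (simp only: h5')
    finally show ?thesis by algebra
  qed
  have m6: "M*G1 = (c^3*Q^4*a*T*(Q*x-c)*E*(a-x)*(1-a*Q*x)*(1-Q*x^2))*F0"
  proof -
    have "M*G1 = (c^2*Q^3*a*E*D1*Fc)*(G1*(c*D2*D3))" unfolding M_def by algebra
    also have "\<dots> = (c^2*Q^3*a*E*D1*Fc)*(a*T*(Q*x-c)*E*F')" by (simp only: h6')
    also have "\<dots> = (c^2*Q^3*a*T*(Q*x-c)*E)*(F'*(a*E*D1*Fc))" by algebra
    also have "\<dots> = (c^2*Q^3*a*T*(Q*x-c)*E)*(F0*(Q*(a-x)*(1-a*Q*x)*(1-Q*x^2)*c))" by (simp only: h4')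
    finally show ?thesis by algebra
  qed
  have key: "Q*(c-a)*(1-a*c*Q)*(1-Q^4*c^2)*M + (1-Q^2*c^2)*(1-Q^2*c*a)*(a-Q*c)*(c^2*Q^3*a*E*D2*D3*Fc*(c-x))
     - Q^2*c^2*(1-Q^4*c^2)*(1-a*c*Q^2)*(Q*c-a)*(c*Q^2*a*E*D3*Fc*(c*Q-x)*(c-x))
     + Q^3*c^2*(1-Q^2*c^2)*(1-a*c*Q^3)*(Q^2*c-a)*(a*E*Fc*(c*Q^2-x)*(c*Q-x)*(c-x))
     = c^3*Q^4*a*T*(Q*x-c)*E*(a-x)*(1-a*Q*x)*(1-Q*x^2) - c^2*Q^3*a*E*D3*Fc*(a*T*(x-c)*(1-x^2))"
    unfolding M_def T_def D1_def D2_def D3_def E_def Fc_def by algebra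
  have "M*(Q*(c-a)*(1-a*c*Q)*(1-Q^4*c^2)*F0
   + (1-Q^2*c^2)*(1-Q^2*c*a)*(a-Q*c)*F1
   - Q^2*c^2*(1-Q^4*c^2)*(1-a*c*Q^2)*(Q*c-a)*F2
   + Q^3*c^2*(1-Q^2*c^2)*(1-a*c*Q^3)*(Q^2*c-a)*F3) = 
     Q*(c-a)*(1-a*c*Q)*(1-Q^4*c^2)*M*F0 + (1-Q^2*c^2)*(1-Q^2*c*a)*(a-Q*c)*(M*F1)
     - Q^2*c^2*(1-Q^4*c^2)*(1-a*c*Q^2)*(Q*c-a)*(M*F2) + Q^3*c^2*(1-Q^2*c^2)*(1-a*c*Q^3)*(Q^2*c-a)*(M*F3)"
    by algebra
  also have "\<dots> = M*G1 - M*G0" unfolding m1 m2 m3 m5 m6 using key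
    by (metis (no_types, lifting) left_diff_distrib distrib_right mult.assoc)
  finally have "M*(Q*(c-a)*(1-a*c*Q)*(1-Q^4*c^2)*F0
   + (1-Q^2*c^2)*(1-Q^2*c*a)*(a-Q*c)*F1
   - Q^2*c^2*(1-Q^4*c^2)*(1-a*c*Q^2)*(Q*c-a)*F2
   + Q^3*c^2*(1-Q^2*c^2)*(1-a*c*Q^3)*(Q^2*c-a)*F3) = M*(G1 - G0)" by (simp add: right_diff_distrib)
  then show ?thesis using Mnz by simp
qed


definition Aterm :: "'a::field \<Rightarrow> nat \<Rightarrow> nat \<Rightarrow> 'a" where
  "Aterm Q n k = qpoch (inverse (Q^n)) Q k * qpoch (Q^(n+1)) Q k * Q^k / (qpoch (Q^2) (Q^2) k)^2"
definition Fterm :: "'a::field \<Rightarrow> nat \<Rightarrow> nat \<Rightarrow> nat \<Rightarrow> 'a" where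
  "Fterm Q n s k = Aterm Q n k * qbinom Q (2*k) (k+s)"
definition Ssum :: "'a::field \<Rightarrow> nat \<Rightarrow> nat \<Rightarrow> 'a" where
  "Ssum Q n s = (\<Sum>k=0..n. Fterm Q n s k)"
definition Tc :: "'a::field \<Rightarrow> 'a \<Rightarrow> 'a" where
  "Tc Q c = (1-Q^2*c^2)*(1-Q^3*c^2)*(1-Q^4*c^2)"
definition Wf :: "'a::field \<Rightarrow> 'a \<Rightarrow> 'a \<Rightarrow> 'a \<Rightarrow> 'a" where
  "Wf Q a c x = a*Tc Q c*(x-c)*(1-x^2)/(c*(1-c*Q*x)*(1-c*Q^2*x))"
definition Gfun :: "'a::field \<Rightarrow> nat \<Rightarrow> nat \<Rightarrow> nat \<Rightarrow> 'a" where
  "Gfun Q n s k = Wf Q (Q^n) (Q^s) (Q^k) * Fterm Q n s k"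

lemma Fterm_lt: "k < s \<Longrightarrow> Fterm Q n s k = 0"
  by (simp add: Fterm_def qbinom_zero)

lemma Fterm_top: "Q \<noteq> 0 \<Longrightarrow> Fterm Q n s (Suc n) = 0"
  by (simp add: Fterm_def Aterm_def qpoch_Suc)

lemma Ssum_gt: "n < s \<Longrightarrow> Ssum Q n s = 0"
  by (simp add: Ssum_def Fterm_lt)

lemma Aterm_step:
  assumes g: "gen Q"
  shows "Aterm Q n (k+1) * (Q^n * (1 - Q^(2*k+2))^2) = Aterm Q n k * (Q * (Q^n - Q^k) * (1 - Q^(n+k+1)))"
proof -
  have Q0: "Q \<noteq> 0" using g gen_nz by blast
  have g2: "gen (Q^2)" using gen_pow[OF g] by simp
  have nz: "qpoch (Q^2) (Q^2) k \<noteq> 0" using qpoch_nz[OF g2] .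
  have e1: "qpoch (Q^2) (Q^2) (k+1) = qpoch (Q^2) (Q^2) k * (1 - Q^(2*k+2))"
    by (simp add: qpoch_Suc power_mult[symmetric] power_add[symmetric])
  have e2: "qpoch (inverse (Q^n)) Q (k+1) = qpoch (inverse (Q^n)) Q k * ((Q^n - Q^k) / Q^n)"
    using Q0 by (simp add: qpoch_Suc field_simps)
  have e3: "qpoch (Q^(n+1)) Q (k+1) = qpoch (Q^(n+1)) Q k * (1 - Q^(n+k+1))"
    by (simp add: qpoch_Suc power_add[symmetric])
  have ne: "1 - Q^(2*k+2) \<noteq> 0" by (rule gen_ne1'[OF g]) simp
  have Qn: "Q^n \<noteq> 0" using Q0 by simp
  have gen: "\<And>A B C D u v w::'a. D\<noteq>0 \<Longrightarrow> u\<noteq>0 \<Longrightarrow> w \<noteq> 0 \<Longrightarrow>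
     (A*(v/w))*(B*C)*(Q*Q^k)/(D*u)^2 * (w*u^2) = A*B*Q^k/D^2*(Q*v*C)" by (simp add: field_simps)
  have "Aterm Q n (k+1) = (qpoch (inverse (Q^n)) Q k * ((Q^n - Q^k) / Q^n)) * (qpoch (Q^(n+1)) Q k * (1 - Q^(n+k+1)))
        * (Q*Q^k) / (qpoch (Q^2) (Q^2) k * (1 - Q^(2*k+2)))^2"
    unfolding Aterm_def e1 e2 e3 by simp
  then show ?thesis unfolding Aterm_def using gen[OF nz ne Qn] by simp
qed

definition al0 :: "'a::field \<Rightarrow> 'a \<Rightarrow> 'a \<Rightarrow> 'a" where "al0 Q a c = Q*(c-a)*(1-a*c*Q)*(1-Q^4*c^2)"
definition al1 :: "'a::field \<Rightarrow> 'a \<Rightarrow> 'a \<Rightarrow> 'a" where "al1 Q a c = (1-Q^2*c^2)*(1-Q^2*c*a)*(a-Q*c)"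
definition al2 :: "'a::field \<Rightarrow> 'a \<Rightarrow> 'a \<Rightarrow> 'a" where "al2 Q a c = Q^2*c^2*(1-Q^4*c^2)*(1-a*c*Q^2)*(Q*c-a)"
definition al3 :: "'a::field \<Rightarrow> 'a \<Rightarrow> 'a \<Rightarrow> 'a" where "al3 Q a c = Q^3*c^2*(1-Q^2*c^2)*(1-a*c*Q^3)*(Q^2*c-a)"

lemma tele_term:
  assumes g: "gen Q"
  shows "al0 Q (Q^n) (Q^s) * Fterm Q n s k + al1 Q (Q^n) (Q^s) * Fterm Q n (s+1) k
       - al2 Q (Q^n) (Q^s) * Fterm Q n (s+2) k + al3 Q (Q^n) (Q^s) * Fterm Q n (s+3) k
       = Gfun Q n s (k+1) - Gfun Q n s k"
proof (cases "s \<le> k")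
  case sk: True
  define a where "a = Q^n"
  define c where "c = Q^s"
  define x where "x = Q^k"
  have Q0: "Q \<noteq> 0" using g gen_nz by blast
  have ne: "\<And>j. 0 < j \<Longrightarrow> 1 - Q^j \<noteq> 0" using gen_ne1'[OF g] by blast
  have pwA: "c*Q*x = Q^(k+s+1)" "c*Q^2*x = Q^(k+s+2)" "c*Q^3*x = Q^(k+s+3)" "Q^2*x^2 = Q^(2*k+2)"
       "a*Q*x = Q^(n+k+1)" "Q*x^2 = Q^(2*k+1)"
    unfolding a_def c_def x_def by (simp_all add: power_add power_mult power2_eq_square algebra_simps)
  have pwB: "c*Q = Q^(s+1)" "c*Q^2 = Q^(s+2)" "Q*x = Q^(k+1)"
    unfolding a_def c_def x_def by (simp_all add: power_add power_mult power2_eq_square algebra_simps)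
  have nz: "Q \<noteq> 0" "a \<noteq> 0" "c \<noteq> 0"
    "1 - c*Q*x \<noteq> 0" "1 - c*Q^2*x \<noteq> 0" "1 - c*Q^3*x \<noteq> 0" "1 - Q^2*x^2 \<noteq> 0" "c - Q*x \<noteq> 0"
  proof -
    show "Q \<noteq> 0" "a \<noteq> 0" "c \<noteq> 0" using Q0 unfolding a_def c_def by simp_all
    show "1 - c*Q*x \<noteq> 0" "1 - c*Q^2*x \<noteq> 0" "1 - c*Q^3*x \<noteq> 0" "1 - Q^2*x^2 \<noteq> 0"
      unfolding pwA by (rule ne; simp)+
    have "c - Q*x = c * (1 - Q^(k+1-s))" unfolding c_def pwB using sk
      by (simp add: algebra_simps power_add[symmetric])
    then show "c - Q*x \<noteq> 0" using \<open>c \<noteq> 0\<close> ne[of "k+1-s"] sk by simp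
  qed
  have hh: "\<And>A qb1 qb0 u v U V::'a. qb1 * u = qb0 * v \<Longrightarrow> U = u \<Longrightarrow> V = v \<Longrightarrow> (A*qb1)*U = (A*qb0)*V"
    by simp
  have e: "k+s+1 = k+(s+1)" "k+(s+1)+1 = k+(s+2)" "k+(s+2)+1 = k+(s+3)" by simp_all
  have h1: "Fterm Q n (s+1) k*(c*(1-c*Q*x)) = Fterm Q n s k*(c-x)"
    unfolding Fterm_def
    by (rule hh[OF qbinom_s_step[OF g, of k s, unfolded e]]) (simp_all add: c_def x_def power_add ac_simps)
  have h2: "Fterm Q n (s+2) k*(c*Q*(1-c*Q^2*x)) = Fterm Q n (s+1) k*(c*Q-x)"
    unfolding Fterm_def
    by (rule hh[OF qbinom_s_step[OF g, of k "s+1", unfolded e]]) (simp_all add: c_def x_def power_add ac_simps power2_eq_square)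
  have h3: "Fterm Q n (s+3) k*(c*Q^2*(1-c*Q^3*x)) = Fterm Q n (s+2) k*(c*Q^2-x)"
    unfolding Fterm_def
    by (rule hh[OF qbinom_s_step[OF g, of k "s+2", unfolded e]]) (simp_all add: c_def x_def power_add ac_simps power2_eq_square power3_eq_cube)
  have h4: "Fterm Q n s (k+1)*(a*(1-Q^2*x^2)*(1-c*Q*x)*(c-Q*x)) = Fterm Q n s k*(Q*(a-x)*(1-a*Q*x)*(1-Q*x^2)*c)"
  proof -
    have A: "Aterm Q n (k+1) * (a * (1 - Q^2*x^2)^2) = Aterm Q n k * (Q * (a - x) * (1 - a*Q*x))"
    proof -
      have E: "a * (1 - Q^2*x^2)^2 = Q^n * (1 - Q^(2*k+2))^2" "Q * (a - x) * (1 - a*Q*x) = Q * (Q^n - Q^k) * (1 - Q^(n+k+1))"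
        by (simp_all add: a_def x_def power_add power_mult power2_eq_square ac_simps)
      show ?thesis unfolding E by (rule Aterm_step[OF g])
    qed
    have B: "qbinom Q (2*(k+1)) (k+1+s) * ((1 - c*Q*x) * (c - Q*x))
       = qbinom Q (2*k) (k+s) * ((1 - Q*x^2) * (1 - Q^2*x^2) * c)"
    proof -
      have "(1 - c*Q*x) * (c - Q*x) = (1 - Q^(k+s+1)) * (Q^s - Q^(k+1))"
           "(1 - Q*x^2) * (1 - Q^2*x^2) * c = (1 - Q^(2*k+1)) * (1 - Q^(2*k+2)) * Q^s"
        by (simp_all add: c_def x_def power_add power_mult power2_eq_square ac_simps)
      then show ?thesis using qbinom_k_step[OF g sk] by (simp only:)
    qed
    have "Fterm Q n s (k+1)*(a*(1-Q^2*x^2)*(1-c*Q*x)*(c-Q*x)) * (1-Q^2*x^2)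
        = (Aterm Q n (k+1) * (a * (1 - Q^2*x^2)^2)) * (qbinom Q (2*(k+1)) (k+1+s) * ((1 - c*Q*x) * (c - Q*x)))"
      unfolding Fterm_def by (simp add: power2_eq_square ac_simps)
    also have "\<dots> = (Aterm Q n k * (Q * (a - x) * (1 - a*Q*x))) * (qbinom Q (2*k) (k+s) * ((1 - Q*x^2) * (1 - Q^2*x^2) * c))"
      unfolding A B ..
    also have "\<dots> = Fterm Q n s k*(Q*(a-x)*(1-a*Q*x)*(1-Q*x^2)*c) * (1-Q^2*x^2)"
      unfolding Fterm_def by (simp add: ac_simps)
    finally show ?thesis using nz(7) by simp
  qed
  have hd: "\<And>N D F::'a. D \<noteq> 0 \<Longrightarrow> N / D * F * D = N * F" by simp
  have h5: "Gfun Q n s k*(c*(1-c*Q*x)*(1-c*Q^2*x)) = a*((1-Q^2*c^2)*(1-Q^3*c^2)*(1-Q^4*c^2))*(x-c)*(1-x^2)*Fterm Q n s k"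
    unfolding Gfun_def a_def[symmetric] c_def[symmetric] x_def[symmetric] Wf_def Tc_def
    by (rule hd) (use nz in simp)
  have h6: "Gfun Q n s (k+1)*(c*(1-c*Q^2*x)*(1-c*Q^3*x)) = a*((1-Q^2*c^2)*(1-Q^3*c^2)*(1-Q^4*c^2))*(Q*x-c)*(1-Q^2*x^2)*Fterm Q n s (k+1)"
  proof -
    have xx: "Q^(k+1) = Q*x" unfolding x_def by simp
    have d: "1 - c*Q*(Q*x) = 1-c*Q^2*x" "1 - c*Q^2*(Q*x) = 1-c*Q^3*x" "1 - (Q*x)^2 = 1-Q^2*x^2"
      by (simp_all add: power2_eq_square power3_eq_cube algebra_simps)
    show ?thesis
      unfolding Gfun_def a_def[symmetric] c_def[symmetric] xx Wf_def Tc_def d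
      by (rule hd) (use nz in simp)
  qed
  have "al0 Q a c * Fterm Q n s k + al1 Q a c * Fterm Q n (s+1) k
       - al2 Q a c * Fterm Q n (s+2) k + al3 Q a c * Fterm Q n (s+3) k
       = Gfun Q n s (k+1) - Gfun Q n s k"
    unfolding al0_def al1_def al2_def al3_def
    by (rule cert_ideal[OF nz h1 h2 h3 h4 h5 h6])
  then show ?thesis unfolding a_def c_def .
next
  case False
  then have "Fterm Q n (s+i) k = 0" for i by (simp add: Fterm_lt)
  moreover have "Gfun Q n s k = 0" using False by (simp add: Gfun_def Fterm_lt)
  moreover have "Gfun Q n s (k+1) = 0"
  proof (cases "k+1 = s")
    case True then show ?thesis by (simp add: Gfun_def Wf_def)
  next
    case False then show ?thesis using \<open>\<not> s \<le> k\<close> by (simp add: Gfun_def Fterm_lt)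
  qed
  ultimately show ?thesis by (metis add.right_neutral diff_self mult_zero_right add_0 diff_0_right)
qed

lemma Ssum_rec:
  assumes g: "gen Q"
  shows "al0 Q (Q^n) (Q^s) * Ssum Q n s + al1 Q (Q^n) (Q^s) * Ssum Q n (s+1)
       - al2 Q (Q^n) (Q^s) * Ssum Q n (s+2) + al3 Q (Q^n) (Q^s) * Ssum Q n (s+3) = 0"
proof -
  have Q0: "Q \<noteq> 0" using g gen_nz by blast
  have "al0 Q (Q^n) (Q^s) * Ssum Q n s + al1 Q (Q^n) (Q^s) * Ssum Q n (s+1)
       - al2 Q (Q^n) (Q^s) * Ssum Q n (s+2) + al3 Q (Q^n) (Q^s) * Ssum Q n (s+3)
      = (\<Sum>k=0..n. al0 Q (Q^n) (Q^s) * Fterm Q n s k + al1 Q (Q^n) (Q^s) * Fterm Q n (s+1) k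
       - al2 Q (Q^n) (Q^s) * Fterm Q n (s+2) k + al3 Q (Q^n) (Q^s) * Fterm Q n (s+3) k)"
    unfolding Ssum_def by (simp add: sum_distrib_left sum.distrib sum_subtractf)
  also have "\<dots> = (\<Sum>k=0..n. Gfun Q n s (Suc k) - Gfun Q n s k)"
    using tele_term[OF g] by simp
  also have "\<dots> = Gfun Q n s (Suc n) - Gfun Q n s 0" by (rule sum_Suc_diff) simp
  also have "\<dots> = 0" using Q0 by (simp add: Gfun_def Fterm_top Wf_def)
  finally show ?thesis .
qed

definition Rhs :: "'a::field \<Rightarrow> nat \<Rightarrow> nat \<Rightarrow> 'a" where
  "Rhs q n s = (if s mod 2 = n mod 2 then
       (- 1) ^ s * q powi (int n - int s ^ 2)
       * (qbinom (q ^ 4) n ((n - s) div 2)) ^ 2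
       * qpoch (q ^ 2) (q ^ 2) (n - s)
       * qpoch (q ^ 2) (q ^ 2) (n + s)
       / (qpoch (q ^ 4) (q ^ 4) n) ^ 2
     else 0)"

lemma K_abs:
  fixes Q C X1 X2 Y1 Y2 bm bm1 sg u p1 p2 D4 :: "'a::field"
  assumes "bm*(1-X2) = bm1*(1-Y2)"
  shows "Q*C^2*(1-Y2)*(Q*C*(1-X1)) * (sg*u*bm1^2*p1*(p2*(1-Y1)*(1-Y2))/D4)
       = C*(1-X2)*(1-Y1) * (sg*(u*(Q^2*C^2))*bm^2*(p1*(1-X1)*(1-X2))*p2/D4)"
proof -
  have e: "bm1^2*(1-Y2)^2 = bm^2*(1-X2)^2" using assms by (metis power_mult_distrib)
  have "Q*C^2*(1-Y2)*(Q*C*(1-X1)) * (sg*u*bm1^2*p1*(p2*(1-Y1)*(1-Y2)))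
      = (Q^2*C^3*(1-X1)*sg*u*p1*p2*(1-Y1)) * (bm1^2*(1-Y2)^2)" by algebra
  also have "\<dots> = (Q^2*C^3*(1-X1)*sg*u*p1*p2*(1-Y1)) * (bm^2*(1-X2)^2)" unfolding e ..
  also have "\<dots> = C*(1-X2)*(1-Y1) * (sg*(u*(Q^2*C^2))*bm^2*(p1*(1-X1)*(1-X2))*p2)" by algebra
  finally show ?thesis by (metis times_divide_eq_right)
qed

lemma Kt:
  assumes g: "gen q" and t: "t + 2 \<le> n" "t mod 2 = n mod 2"
  shows "(q^2)*((q^2)^t)^2*(1-(q^2)^n*(q^2)^t*(q^2)^2)*((q^2)*(q^2)^t-(q^2)^n) * Rhs q n (t+2)
       = ((q^2)^t-(q^2)^n)*(1-(q^2)^n*(q^2)^t*(q^2)) * Rhs q n t"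
proof -
  define Q where "Q = q^2"
  define m where "m = (n - t) div 2"
  have q0: "q \<noteq> 0" using g gen_nz by blast
  have gQ: "gen Q" unfolding Q_def using gen_pow[OF g] by simp
  have g4: "gen (q^4)" using gen_pow[OF g] by simp
  have m2: "2*m = n - t" using t unfolding m_def by presburger
  have m1: "1 \<le> m" "m \<le> n" using m2 t by linarith+
  have mm: "(n - (t+2)) div 2 = m - 1" using m2 by (simp add: m_def)
  have par: "(t+2) mod 2 = n mod 2" using t by presburger
  define bm where "bm = qbinom (q^4) n m"
  define bm1 where "bm1 = qbinom (q^4) n (m-1)"
  have B: "bm*(1-Q^(n-t)) = bm1*(1-Q^(n+t+2))"
  proof -
    have e1: "(q^4)^m = q^(4*m)" "Q^(n-t) = q^(2*(n-t))" unfolding Q_def by (simp_all only: power_mult)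
    have e2: "4*m = 2*(n-t)" using m2 by simp
    have "(q^4)^m = Q^(n-t)" unfolding e1 e2 ..
    moreover have "(q^4)^(n-m+1) = Q^(n+t+2)"
    proof -
      have e1: "(q^4)^(n-m+1) = q^(4*(n-m+1))" "Q^(n+t+2) = q^(2*(n+t+2))" unfolding Q_def by (simp_all only: power_mult)
      have e2: "4*(n-m+1) = 2*(n+t+2)" using m2 m1 by simp
      show ?thesis unfolding e1 e2 ..
    qed
    ultimately show ?thesis using qbinom_m_step[OF g4 m1] unfolding bm_def bm1_def by simp
  qed
  have P1: "qpoch Q Q (n-t) = qpoch Q Q (n-t-2) * (1-Q^(n-t-1)) * (1-Q^(n-t))"
  proof -
    have "n-t = Suc (Suc (n-t-2))" using t by simp
    then show ?thesis using qpoch_Suc_self[of Q "Suc (n-t-2)"] qpoch_Suc_self[of Q "n-t-2"]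
      by (metis Suc_diff_Suc diff_Suc_1 diff_diff_left numeral_2_eq_2)
  qed
  have P2: "qpoch Q Q (n+(t+2)) = qpoch Q Q (n+t) * (1-Q^(n+t+1)) * (1-Q^(n+t+2))"
    using qpoch_Suc_self[of Q "Suc (n+t)"] qpoch_Suc_self[of Q "n+t"] by simp
  have pw: "q powi (int n - int t ^ 2) = q powi (int n - int (t+2) ^ 2) * (Q^2*(Q^t)^2)"
  proof -
    have e: "int n - int t ^ 2 = (int n - int (t+2) ^ 2) + int (4*t+4)" by (simp add: power2_eq_square algebra_simps)
    have "q powi (int n - int t ^ 2) = q powi ((int n - int (t+2) ^ 2) + int (4*t+4))" by (simp only: e)
    also have "\<dots> = q powi (int n - int (t+2) ^ 2) * q^(4*t+4)"
      by (simp only: power_int_add[OF disjI1[OF q0]] power_int_of_nat)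
    finally have "q powi (int n - int t ^ 2) = q powi (int n - int (t+2) ^ 2) * q^(4*t+4)" .
    moreover have "q^(4*t+4) = Q^2*(Q^t)^2" unfolding Q_def
      by (simp add: power_mult[symmetric] power_add[symmetric] algebra_simps)
    ultimately show ?thesis by simp
  qed
  have R1: "Rhs q n t = (-1)^t*(q powi (int n - int (t+2) ^ 2)*(Q^2*(Q^t)^2))*bm^2
        *(qpoch Q Q (n-t-2)*(1-Q^(n-t-1))*(1-Q^(n-t)))*qpoch Q Q (n+t)/(qpoch (q^4) (q^4) n)^2"
    unfolding Rhs_def using t(2) by (simp add: m_def bm_def pw P1[unfolded Q_def] Q_def)
  have R2: "Rhs q n (t+2) = (-1)^t*q powi (int n - int (t+2) ^ 2)*bm1^2
        *qpoch Q Q (n-t-2)*(qpoch Q Q (n+t)*(1-Q^(n+t+1))*(1-Q^(n+t+2)))/(qpoch (q^4) (q^4) n)^2"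
  proof -
    have "n - (t+2) = n-t-2" by simp
    then show ?thesis unfolding Rhs_def using par mm P2[unfolded Q_def]
      by (simp add: bm1_def Q_def)
  qed
  have ab: "(Q^t - Q^n) = Q^t*(1-Q^(n-t))" "Q*Q^t - Q^n = Q*Q^t*(1-Q^(n-t-1))"
    "Q^n*Q^t*Q = Q^(n+t+1)" "Q^n*Q^t*Q^2 = Q^(n+t+2)"
    using t by (simp_all add: algebra_simps power_add[symmetric])
       (simp_all add: power_add[symmetric] power_Suc[symmetric])
  show ?thesis
    unfolding Q_def[symmetric] ab R1 R2
    by (rule K_abs[OF B])
qed

definition R0 :: "'a::field \<Rightarrow> nat \<Rightarrow> nat \<Rightarrow> 'a" where
  "R0 q n j = (if j \<le> n then Rhs q n j else 0)"

lemma Rhs_par: "j mod 2 \<noteq> n mod 2 \<Longrightarrow> Rhs q n j = 0" by (simp add: Rhs_def)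

lemma Rhs_rec:
  assumes g: "gen q" and sn: "s < n"
  shows "al0 (q^2) ((q^2)^n) ((q^2)^s) * Rhs q n s + al1 (q^2) ((q^2)^n) ((q^2)^s) * R0 q n (s+1)
       - al2 (q^2) ((q^2)^n) ((q^2)^s) * R0 q n (s+2) + al3 (q^2) ((q^2)^n) ((q^2)^s) * R0 q n (s+3) = 0"
proof -
  define Q where "Q = q^2"
  define a where "a = Q^n"
  define c where "c = Q^s"
  show ?thesis unfolding Q_def[symmetric] a_def[symmetric] c_def[symmetric]
  proof (cases "s mod 2 = n mod 2")
    case True
    then have s2: "s + 2 \<le> n" using sn by presburger
    have p: "(s+1) mod 2 \<noteq> n mod 2" "(s+3) mod 2 \<noteq> n mod 2" using True by presburger+
    have z: "R0 q n (s+1) = 0" "R0 q n (s+3) = 0" using p by (simp_all add: R0_def Rhs_par)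
    have r2: "R0 q n (s+2) = Rhs q n (s+2)" using s2 by (simp add: R0_def)
    have K: "Q*c^2*(1-a*c*Q^2)*(Q*c-a) * Rhs q n (s+2) = (c-a)*(1-a*c*Q) * Rhs q n s"
      using Kt[OF g s2 True] unfolding Q_def[symmetric] a_def[symmetric] c_def[symmetric] .
    have "al2 Q a c * Rhs q n (s+2) = Q*(1-Q^4*c^2) * (Q*c^2*(1-a*c*Q^2)*(Q*c-a) * Rhs q n (s+2))"
      unfolding al2_def by algebra
    also have "\<dots> = al0 Q a c * Rhs q n s" unfolding K al0_def by algebra
    finally show "al0 Q a c * Rhs q n s + al1 Q a c * R0 q n (s+1) - al2 Q a c * R0 q n (s+2) + al3 Q a c * R0 q n (s+3) = 0"
      unfolding z r2 by simp
  next
    case False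
    have p: "(s+2) mod 2 \<noteq> n mod 2" using False by presburger
    have z: "Rhs q n s = 0" "R0 q n (s+2) = 0" using False p by (simp_all add: R0_def Rhs_par)
    show "al0 Q a c * Rhs q n s + al1 Q a c * R0 q n (s+1) - al2 Q a c * R0 q n (s+2) + al3 Q a c * R0 q n (s+3) = 0"
    proof (cases "s + 1 = n")
      case True
      have "a - Q*c = 0" unfolding a_def c_def True[symmetric] by simp
      then have "al1 Q a c = 0" unfolding al1_def by simp
      moreover have "R0 q n (s+3) = 0" using True by (simp add: R0_def)
      ultimately show ?thesis unfolding z by simp
    next
      case nT: False
      then have s3: "s + 1 + 2 \<le> n" "(s+1) mod 2 = n mod 2" using sn False by presburger+
      have r: "R0 q n (s+1) = Rhs q n (s+1)" "R0 q n (s+3) = Rhs q n (s+3)" using s3 by (simp_all add: R0_def)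
      have K: "Q*(Q*c)^2*(1-a*(Q*c)*Q^2)*(Q*(Q*c)-a) * Rhs q n (s+3) = ((Q*c)-a)*(1-a*(Q*c)*Q) * Rhs q n (s+1)"
        using Kt[OF g s3] unfolding Q_def[symmetric] a_def[symmetric] c_def[symmetric] power_Suc
        by (simp add: numeral_3_eq_3 c_def)
      have "al3 Q a c * Rhs q n (s+3) = (1-Q^2*c^2) * (Q*(Q*c)^2*(1-a*(Q*c)*Q^2)*(Q*(Q*c)-a) * Rhs q n (s+3))"
        unfolding al3_def by algebra
      also have "\<dots> = - (al1 Q a c * Rhs q n (s+1))" unfolding K al1_def by algebra
      finally show ?thesis unfolding z r by simp
    qed
  qed
qed

lemma V_lemma:
  assumes g: "gen q"
  shows "qpoch (inverse ((q^2)^n)) (q^2) n * q^(n*(n+1)) = (-1)^n * qpoch (q^2) (q^2) n"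
proof -
  define Q where "Q = q^2"
  have q0: "q \<noteq> 0" using g gen_nz by blast
  have Q0: "Q \<noteq> 0" using q0 by (simp add: Q_def)
  have refl: "qpoch (inverse (Q^n)) Q n = (\<Prod>j<n. 1 - inverse (Q^(Suc j)))"
  proof -
    have "qpoch (inverse (Q^n)) Q n = (\<Prod>i\<in>{0..<n}. 1 - inverse (Q^n) * Q^i)"
      by (simp add: qpoch_def lessThan_atLeast0)
    also have "\<dots> = (\<Prod>i\<in>{0..<n}. 1 - inverse (Q^n) * Q^(n + 0 - Suc i))"
      by (rule prod.atLeastLessThan_rev)
    also have "\<dots> = (\<Prod>i\<in>{0..<n}. 1 - inverse (Q^(Suc i)))"
    proof (rule prod.cong[OF refl])
      fix i assume "i \<in> {0..<n}"
      then have "n = Suc i + (n - Suc i)" by simp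
      then have "Q^n = Q^(Suc i) * Q^(n - Suc i)" by (metis power_add)
      then show "1 - inverse (Q^n) * Q^(n + 0 - Suc i) = 1 - inverse (Q^(Suc i))"
        using Q0 by (simp add: field_simps)
    qed
    finally show ?thesis by (simp add: lessThan_atLeast0)
  qed
  have W: "(\<Prod>j<m. 1 - inverse (Q^(Suc j))) * q^(m*(m+1)) = (-1)^m * qpoch Q Q m" for m
  proof (induction m)
    case (Suc m)
    have ex: "Suc m * (Suc m + 1) = m*(m+1) + 2*Suc m" by (simp add: algebra_simps)
    have e: "q^(Suc m * (Suc m + 1)) = q^(m*(m+1)) * Q^(Suc m)"
      unfolding ex Q_def power_add power_mult ..
    have "(\<Prod>j<Suc m. 1 - inverse (Q^(Suc j))) * q^(Suc m * (Suc m + 1))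
        = ((\<Prod>j<m. 1 - inverse (Q^(Suc j))) * q^(m*(m+1))) * ((1 - inverse (Q^(Suc m))) * Q^(Suc m))"
      unfolding e by (simp add: ac_simps)
    also have "\<dots> = (-1)^m * qpoch Q Q m * (Q^(Suc m) - 1)" unfolding Suc.IH using Q0 by (simp add: field_simps)
    also have "\<dots> = (-1)^(Suc m) * qpoch Q Q (Suc m)" by (simp add: qpoch_Suc algebra_simps)
    finally show ?case .
  qed simp
  show ?thesis using W[of n] unfolding Q_def[symmetric] refl .
qed

lemma base_case:
  assumes g: "gen q"
  shows "Ssum (q^2) n n = Rhs q n n"
proof -
  define Q where "Q = q^2"
  have q0: "q \<noteq> 0" using g gen_nz by blast
  have gQ: "gen Q" unfolding Q_def using gen_pow[OF g] by simp
  have sum: "Ssum Q n n = Fterm Q n n n"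
  proof -
    have "Ssum Q n n = (\<Sum>k<Suc n. Fterm Q n n k)" unfolding Ssum_def
      by (simp add: atLeast0AtMost lessThan_Suc_atMost)
    also have "\<dots> = (\<Sum>k<n. Fterm Q n n k) + Fterm Q n n n" by simp
    also have "(\<Sum>k<n. Fterm Q n n k) = 0" by (rule sum.neutral) (simp add: Fterm_lt)
    finally show ?thesis by simp
  qed
  have F: "Fterm Q n n n = Aterm Q n n" unfolding Fterm_def using qbinom_self[OF gQ, of "2*n"] by (simp add: mult_2)
  have P2n: "qpoch Q Q (2*n) = qpoch Q Q n * qpoch (Q^(n+1)) Q n" using qpoch_add[of Q n n] by (simp add: mult_2)
  have V: "qpoch (inverse (Q^n)) Q n = (-1)^n * qpoch Q Q n / q^(n*(n+1))"
    using V_lemma[OF g, of n] q0 unfolding Q_def[symmetric] by (simp add: field_simps)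
  have pw: "q powi (int n - int n ^ 2) = Q^n / q^(n*(n+1))"
  proof -
    have e: "int n - int n ^ 2 = int (2*n) - int (n*(n+1))" by (simp add: power2_eq_square algebra_simps)
    have "q powi (int n - int n ^ 2) = q powi (int (2*n)) / q powi (int (n*(n+1)))"
      unfolding e by (rule power_int_diff) (use q0 in simp)
    also have "\<dots> = Q^n / q^(n*(n+1))" by (simp only: power_int_of_nat) (simp add: Q_def power_mult)
    finally show ?thesis .
  qed
  have nzP: "qpoch Q Q n \<noteq> 0" using qpoch_nz[OF gQ] .
  have Q4: "Q^2 = q^4" unfolding Q_def by simp
  have "Aterm Q n n = (-1)^n * q powi (int n - int n ^ 2) * qpoch Q Q (2*n) / (qpoch (Q^2) (Q^2) n)^2"
    unfolding Aterm_def V pw P2n using nzP q0 by (simp add: field_simps)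
  moreover have "Rhs q n n = (-1)^n * q powi (int n - int n ^ 2) * qpoch Q Q (2*n) / (qpoch (Q^2) (Q^2) n)^2"
    unfolding Rhs_def Q4 by (simp add: qbinom_0 Q_def mult_2)
  ultimately show ?thesis using sum F unfolding Q_def by simp
qed

lemma exact_identity:
  assumes g: "gen q" and sn: "s \<le> n"
  shows "Ssum (q^2) n s = Rhs q n s"
proof -
  have gQ: "gen (q^2)" using gen_pow[OF g] by simp
  have main: "\<forall>s. n - s = d \<longrightarrow> s \<le> n \<longrightarrow> Ssum (q^2) n s = Rhs q n s" for d
  proof (induction d rule: less_induct)
    case (less d)
    show ?case
    proof (intro allI impI)
      fix s assume ds: "n - s = d" and sn: "s \<le> n"
      show "Ssum (q^2) n s = Rhs q n s"
      proof (cases "s = n")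
        case True then show ?thesis using base_case[OF g] by simp
      next
        case False
        then have sl: "s < n" using sn by simp
        have IH: "Ssum (q^2) n (s+i) = R0 q n (s+i)" if "1 \<le> i" for i
        proof (cases "s + i \<le> n")
          case True
          then show ?thesis using less.IH[of "n - (s+i)"] ds that sl by (simp add: R0_def)
        next
          case False
          then show ?thesis by (simp add: R0_def Ssum_gt)
        qed
        have rec: "al0 (q^2) ((q^2)^n) ((q^2)^s) * Ssum (q^2) n s + al1 (q^2) ((q^2)^n) ((q^2)^s) * R0 q n (s+1)
          - al2 (q^2) ((q^2)^n) ((q^2)^s) * R0 q n (s+2) + al3 (q^2) ((q^2)^n) ((q^2)^s) * R0 q n (s+3) = 0"
          using Ssum_rec[OF gQ, of n s] IH[of 1] IH[of 2] IH[of 3] by simp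
        have nz: "al0 (q^2) ((q^2)^n) ((q^2)^s) \<noteq> 0"
        proof -
          define Q where "Q = (q^2::'a)"
          have Q0: "Q \<noteq> 0" using gen_nz[OF gQ] Q_def by simp
          have e: "(Q^s - Q^n) = Q^s * (1 - Q^(n-s))" "Q^n*Q^s*Q = Q^(n+s+1)" "Q^4*(Q^s)^2 = Q^(2*s+4)"
            using sl by (simp_all add: algebra_simps power_add[symmetric] power_mult[symmetric])
          have "1 - Q^(n-s) \<noteq> 0" "1 - Q^(n+s+1) \<noteq> 0" "1 - Q^(2*s+4) \<noteq> 0"
            by (rule gen_ne1'[OF gQ[folded Q_def]]; use sl in simp)+
          then show ?thesis unfolding al0_def Q_def[symmetric] e using Q0 by simp
        qed
        from rec Rhs_rec[OF g sl] nz show ?thesis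
          by (metis add_right_cancel diff_add_cancel mult_left_cancel)
      qed
    qed
  qed
  then show ?thesis using sn by blast
qed

abbreviation XX :: "rat poly" where "XX \<equiv> [:0, 1:]"

lemma monom_X: "monom (1::rat) i = XX ^ i"
  by (simp add: monom_altdef)

lemma qint_X: "qint p = (\<Sum>i<p. XX ^ i)"
  by (simp add: qint_def monom_X)

lemma Xp_qint: "XX ^ p - 1 = (XX - 1) * qint p"
  unfolding qint_X by (rule power_diff_1_eq)

lemma dvd_pow_sub1: "(x - 1) dvd (x ^ k - (1::'a::comm_ring_1))"
  using power_diff_1_eq[of x k] by (metis dvd_triv_left)

lemma dvd_gcd_pow:
  fixes d :: "'a::comm_ring_1"
  shows "d dvd x^m - 1 \<Longrightarrow> d dvd x^n - 1 \<Longrightarrow> d dvd x^(gcd m n) - 1"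
proof (induction m n rule: gcd_nat_induct)
  case (base m) then show ?case by simp
next
  case (step m n)
  have e: "x^m - 1 = x^(m mod n) * ((x^n)^(m div n) - 1) + (x^(m mod n) - 1)"
  proof -
    have "m = m mod n + n * (m div n)" by simp
    then have "x^m = x^(m mod n) * (x^n)^(m div n)" by (metis power_add power_mult)
    then show ?thesis by (simp add: algebra_simps)
  qed
  have "d dvd (x^n)^(m div n) - 1" using step.prems(2) dvd_pow_sub1[of "x^n" "m div n"] dvd_trans by blast
  then have h: "d dvd x^(m mod n) * ((x^n)^(m div n) - 1)" by (rule dvd_mult)
  have "d dvd x^(m mod n) * ((x^n)^(m div n) - 1) + (x^(m mod n) - 1)" using step.prems(1) unfolding e .
  then have "d dvd x^(m mod n) - 1" using dvd_add_right_iff[OF h] by blast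
  then have "d dvd x^(gcd n (m mod n)) - 1" using step.IH step.prems(2) by blast
  then show ?case by (simp add: gcd_red_nat[symmetric])
qed

lemma qint_const: "(XX - 1) dvd (qint p - of_nat p)"
proof (induction p)
  case (Suc p)
  have "qint (Suc p) - of_nat (Suc p) = (qint p - of_nat p) + (XX^p - 1)"
    unfolding qint_X by (simp add: algebra_simps)
  then show ?case using Suc dvd_pow_sub1[of XX p] by (metis dvd_add)
qed (simp add: qint_def)

lemma coprime_Xj_qint:
  assumes p: "prime p" and nd: "\<not> p dvd j"
  shows "coprime (1 - monom (1::rat) j) (qint p)"
proof (rule coprimeI)
  fix d assume d1: "d dvd 1 - monom 1 j" and d2: "d dvd qint p"
  have "XX^j - 1 = - (1 - monom 1 j)" unfolding monom_X by simp
  then have a: "d dvd XX^j - 1" using d1 by (simp only: dvd_minus_iff)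
  have b: "d dvd XX^p - 1" using d2 unfolding Xp_qint by simp
  have "gcd j p = 1" using prime_imp_coprime[OF p nd] by (simp add: coprime_iff_gcd_eq_1 gcd.commute)
  then have "d dvd XX - 1" using dvd_gcd_pow[OF a b] by simp
  then have "d dvd qint p - of_nat p" using qint_const dvd_trans by blast
  then have "d dvd qint p - (qint p - of_nat p)" using d2 by (rule dvd_diff[rotated])
  then have "d dvd of_nat p" by simp
  moreover have "is_unit (of_nat p :: rat poly)"
    using prime_gt_0_nat[OF p] by (simp add: of_nat_poly is_unit_const_poly_iff dvd_field_iff)
  ultimately show "is_unit d" using dvd_unit_imp_unit by blast
qed

lemma coprime_X_qint:
  assumes p0: "0 < p"
  shows "coprime (monom (1::rat) j) (qint p)"
proof -
  have "coprime XX (qint p)"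
  proof (rule coprimeI)
    fix d assume d1: "d dvd XX" and d2: "d dvd qint p"
    have "d dvd XX^p - 1" using d2 unfolding Xp_qint by simp
    moreover have "d dvd XX^p" using d1 p0 dvd_power[of p XX] dvd_trans by blast
    ultimately have "d dvd XX^p - (XX^p - 1)" by (rule dvd_diff[rotated])
    then have "d dvd 1" by simp
    then show "is_unit d" by simp
  qed
  then show ?thesis unfolding monom_X by simp
qed

definition good :: "nat \<Rightarrow> ratfun \<Rightarrow> bool" where
  "good p f \<longleftrightarrow> (\<exists>a b. b \<noteq> 0 \<and> coprime b (qint p) \<and> f = Fract a b)"

lemma good_poly: "good p (Fract a 1)" unfolding good_def by (intro exI[of _ a] exI[of _ 1]) simp

lemma good_0: "good p 0" using good_poly[of p 0] by (simp add: Zero_fract_def)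
lemma good_1: "good p 1" using good_poly[of p 1] by (simp add: One_fract_def)

lemma good_mult: "good p f \<Longrightarrow> good p g \<Longrightarrow> good p (f * g)"
proof -
  assume "good p f" "good p g"
  then obtain a b c d where "b \<noteq> 0" "coprime b (qint p)" "f = Fract a b" "d \<noteq> 0" "coprime d (qint p)" "g = Fract c d"
    unfolding good_def by blast
  then show ?thesis unfolding good_def
    by (intro exI[of _ "a*c"] exI[of _ "b*d"]) (simp add: coprime_mult_left_iff)
qed

lemma good_add: "good p f \<Longrightarrow> good p g \<Longrightarrow> good p (f + g)"
proof -
  assume "good p f" "good p g"
  then obtain a b c d where "b \<noteq> 0" "coprime b (qint p)" "f = Fract a b" "d \<noteq> 0" "coprime d (qint p)" "g = Fract c d"
    unfolding good_def by blast
  then show ?thesis unfolding good_def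
    by (intro exI[of _ "a*d + c*b"] exI[of _ "b*d"]) (simp add: coprime_mult_left_iff)
qed

lemma good_uminus: "good p f \<Longrightarrow> good p (- f)"
proof -
  assume "good p f"
  then obtain a b where "b \<noteq> 0" "coprime b (qint p)" "f = Fract a b" unfolding good_def by blast
  then show ?thesis unfolding good_def by (intro exI[of _ "-a"] exI[of _ b]) simp
qed

lemma good_diff: "good p f \<Longrightarrow> good p g \<Longrightarrow> good p (f - g)"
  using good_add[of p f "-g"] good_uminus[of p g] by simp

lemma good_inv: "d \<noteq> 0 \<Longrightarrow> coprime d (qint p) \<Longrightarrow> good p (inverse (Fract d 1))"
  unfolding good_def by (intro exI[of _ 1] exI[of _ d]) simp

lemma good_div: "good p f \<Longrightarrow> d \<noteq> 0 \<Longrightarrow> coprime d (qint p) \<Longrightarrow> good p (f / Fract d 1)"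
  using good_mult[OF _ good_inv] by (simp add: divide_inverse)

lemma good_pow: "good p f \<Longrightarrow> good p (f ^ n)"
  by (induction n) (simp_all add: good_1 good_mult)

lemma good_prod: "(\<And>i. i \<in> A \<Longrightarrow> good p (f i)) \<Longrightarrow> good p (\<Prod>i\<in>A. f i)"
proof (induction A rule: infinite_finite_induct)
  case (infinite A) then show ?case by (simp add: good_1)
next
  case empty then show ?case by (simp add: good_1)
next
  case (insert x F) then show ?case by (simp add: good_mult)
qed

lemma good_sum: "(\<And>i. i \<in> A \<Longrightarrow> good p (f i)) \<Longrightarrow> good p (\<Sum>i\<in>A. f i)"
proof (induction A rule: infinite_finite_induct)
  case (infinite A) then show ?case by (simp add: good_0)
next
  case empty then show ?case by (simp add: good_0)
next
  case (insert x F) then show ?case by (simp add: good_add)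
qed

definition inI :: "nat \<Rightarrow> ratfun \<Rightarrow> bool" where
  "inI p f \<longleftrightarrow> (\<exists>h. good p h \<and> f = Fract (qint p ^ 2) 1 * h)"

lemma inI_add: "inI p f \<Longrightarrow> inI p g \<Longrightarrow> inI p (f + g)"
  unfolding inI_def by (auto simp: distrib_left intro: good_add)
lemma inI_diff: "inI p f \<Longrightarrow> inI p g \<Longrightarrow> inI p (f - g)"
  unfolding inI_def by (auto simp: right_diff_distrib intro: good_diff)
lemma inI_mult: "inI p f \<Longrightarrow> good p g \<Longrightarrow> inI p (g * f)"
proof -
  assume "inI p f" "good p g"
  then obtain h where "good p h" "f = Fract (qint p ^ 2) 1 * h" unfolding inI_def by blast
  then show ?thesis unfolding inI_def using \<open>good p g\<close>
    by (intro exI[of _ "g*h"]) (simp add: good_mult ac_simps)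
qed
lemma inI_0: "inI p 0" unfolding inI_def using good_0 by auto

lemma inI_sum: "(\<And>i. i \<in> A \<Longrightarrow> inI p (f i)) \<Longrightarrow> inI p (\<Sum>i\<in>A. f i)"
proof (induction A rule: infinite_finite_induct)
  case (infinite A) then show ?case by (simp add: inI_0)
next
  case empty then show ?case by (simp add: inI_0)
next
  case (insert x F) then show ?case by (simp add: inI_add)
qed

lemma inI_prod:
  fixes k :: nat
  assumes "\<And>i. i < k \<Longrightarrow> inI p (f i - g i)" "\<And>i. i < k \<Longrightarrow> good p (f i)" "\<And>i. i < k \<Longrightarrow> good p (g i)"
  shows "inI p ((\<Prod>i<k. f i) - (\<Prod>i<k. g i))"
  using assms
proof (induction k)
  case 0 then show ?case by (simp add: inI_0)
next
  case (Suc k)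
  have e: "(\<Prod>i<Suc k. f i) - (\<Prod>i<Suc k. g i) = (\<Prod>i<k. f i) * (f k - g k) + g k * ((\<Prod>i<k. f i) - (\<Prod>i<k. g i))"
    by (simp add: algebra_simps)
  have "good p (\<Prod>i<k. f i)" using Suc.prems by (intro good_prod) auto
  then show ?case unfolding e using Suc
    by (intro inI_add inI_mult) (simp_all add: mult.commute)
qed

lemma qcong_of_inI:
  assumes "inI p (A - B)" and p0: "0 < p"
  shows "qcong A B (qint p) 2"
proof -
  obtain a b where b: "b \<noteq> 0" "coprime b (qint p)" and AB: "A - B = Fract (qint p ^ 2 * a) b"
    using assms unfolding inI_def good_def by auto
  define u where "u = fst (quot_of_fract (A - B))"
  define v where "v = snd (quot_of_fract (A - B))"
  have v0: "v \<noteq> 0" unfolding v_def by simp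
  have "Fract u v = Fract (qint p ^ 2 * a) b" unfolding u_def v_def AB[symmetric] by simp
  then have "u * b = qint p ^ 2 * a * v" using eq_fract b v0 by blast
  then have "qint p ^ 2 dvd u * b" by (metis dvd_triv_left mult.assoc)
  moreover have "coprime (qint p ^ 2) b" using b(2) by (simp add: coprime_commute)
  ultimately have "qint p ^ 2 dvd u" using coprime_dvd_mult_left_iff by blast
  then show ?thesis unfolding qcong_def u_def .
qed

lemma qvar_pow: "qvar ^ j = Fract (monom 1 j) 1"
proof (induction j)
  case 0 then show ?case by (simp add: One_fract_def)
next
  case (Suc j)
  then show ?case by (simp add: qvar_def mult_monom monom_Suc)
qed

lemma one_minus_qvar_pow: "1 - qvar ^ j = Fract (1 - monom 1 j) 1"
  unfolding qvar_pow by (simp add: One_fract_def)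

lemma gen_qvar: "gen qvar"
  unfolding gen_def
proof (intro conjI allI impI)
  show "qvar \<noteq> 0" unfolding qvar_def by (simp add: Zero_fract_def eq_fract)
  fix j :: nat assume "0 < j"
  then show "qvar ^ j \<noteq> 1" unfolding qvar_pow by (simp add: One_fract_def eq_fract monom_eq_1_iff)
qed

lemma qpoch_pm: "qpoch x y k * qpoch (-x) y k = qpoch (x^2) (y^2) k"
  unfolding qpoch_def prod.distrib[symmetric]
  by (rule prod.cong) (simp_all add: power2_eq_square power_mult_distrib algebra_simps power_mult[symmetric])

lemma qpoch_split: "qpoch q q (2*k) = qpoch q (q^2) k * qpoch (q^2) (q^2) k"
proof (induction k)
  case (Suc k)
  have e: "2 * Suc k = Suc (Suc (2*k))" by simp
  have a: "qpoch q q (2*Suc k) = qpoch q q (2*k) * (1 - q*q^(2*k)) * (1 - q*q^(Suc (2*k)))"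
    unfolding e by (simp add: qpoch_Suc)
  have b: "q*q^(2*k) = q*(q^2)^k" "q*q^(Suc(2*k)) = q^2*(q^2)^k"
    by (simp_all add: power_mult power2_eq_square)
  have c: "qpoch q (q^2) (Suc k) = qpoch q (q^2) k * (1 - q*(q^2)^k)"
    "qpoch (q^2) (q^2) (Suc k) = qpoch (q^2) (q^2) k * (1 - q^2*(q^2)^k)" by (simp_all add: qpoch_Suc)
  show ?case unfolding a b c Suc.IH by (simp add: ac_simps)
qed simp

lemma qpoch_neg_nz:
  assumes g: "gen q"
  shows "qpoch (-q) q k \<noteq> 0"
proof -
  have "1 - (-q) * q^i \<noteq> 0" for i
  proof
    assume "1 - (-q) * q^i = 0"
    then have h: "q^(Suc i) = -1" by (simp add: algebra_simps) (metis add.commute add_eq_0_iff)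
    have "q^(2*Suc i) = (q^(Suc i))^2" by (simp only: power_mult[symmetric] mult.commute)
    then have "q^(2*Suc i) = 1" using h by simp
    then show False using gen_ne1[OF g, of "2*Suc i"] by simp
  qed
  then show ?thesis unfolding qpoch_def by (simp add: prod_zero_iff)
qed

lemma Tk_form:
  assumes g: "gen q"
  shows "(qbinom (q^2) (2*k) k)^2 * qbinom (q^2) (2*k) (k+s) * q^(2*k)
          / ((qpoch (-(q^2)) (q^2) k)^2 * (qpoch (-q) q (2*k))^2)
       = (qpoch q (q^2) k)^2 * ((q^2)^k * qbinom (q^2) (2*k) (k+s) / (qpoch ((q^2)^2) ((q^2)^2) k)^2)"
proof -
  define Q where "Q = q^2"
  have gQ: "gen Q" unfolding Q_def using gen_pow[OF g] by simp
  have g2: "gen (Q^2)" using gen_pow[OF gQ] by simp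
  have n1: "qpoch Q Q k \<noteq> 0" using qpoch_nz[OF gQ] .
  have n2: "qpoch (-q) q (2*k) \<noteq> 0" using qpoch_neg_nz[OF g] .
  have n3: "qpoch (-Q) Q k \<noteq> 0" using qpoch_neg_nz[OF gQ] .
  have i: "qpoch Q Q k * qpoch (-Q) Q k = qpoch (Q^2) (Q^2) k" using qpoch_pm .
  have ii: "qpoch q q (2*k) * qpoch (-q) q (2*k) = qpoch Q Q (2*k)" unfolding Q_def using qpoch_pm[of q q] .
  have iii: "qpoch q q (2*k) = qpoch q Q k * qpoch Q Q k" unfolding Q_def by (rule qpoch_split)
  have v: "qpoch Q Q (2*k) = qpoch Q Q k * qpoch (Q^(k+1)) Q k" using qpoch_add[of Q k k] by (simp add: mult_2)
  have iv: "qbinom Q (2*k) k = qpoch (Q^(k+1)) Q k / qpoch Q Q k" by (simp add: qbinom_def)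
  have B: "qbinom Q (2*k) k = qpoch q Q k * qpoch (-q) q (2*k) / qpoch Q Q k"
  proof -
    have "qpoch (Q^(k+1)) Q k = qpoch Q Q (2*k) / qpoch Q Q k" using v n1 by (simp add: field_simps)
    also have "\<dots> = qpoch q Q k * qpoch (-q) q (2*k)" using ii iii n1 by (simp add: field_simps)
    finally show ?thesis unfolding iv by simp
  qed
  have qk: "q^(2*k) = Q^k" unfolding Q_def by (simp add: power_mult)
  show ?thesis unfolding Q_def[symmetric] qk B i[symmetric]
    using n1 n2 n3 by (simp add: field_simps)
qed

lemma qpoch_qvar: "qpoch (qvar^a) (qvar^b) m = (\<Prod>i<m. 1 - qvar^(a + b*i))"
  unfolding qpoch_def by (rule prod.cong) (simp_all add: power_add power_mult)

lemma good_qvar_pow: "good p (qvar^j)" unfolding qvar_pow by (rule good_poly)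
lemma good_one_minus: "good p (1 - qvar^j)" unfolding one_minus_qvar_pow by (rule good_poly)
lemma good_qpoch_qvar: "good p (qpoch (qvar^a) (qvar^b) m)"
  unfolding qpoch_qvar by (rule good_prod) (rule good_one_minus)

lemma good_inv_qvar_pow: "0 < p \<Longrightarrow> good p (inverse (qvar^j))"
  unfolding qvar_pow by (rule good_inv) (simp_all add: coprime_X_qint)

lemma den_fract:
  assumes "prime p" "\<And>i. i < m \<Longrightarrow> 0 < a + b*i \<and> \<not> p dvd (a + b*i)"
  shows "\<exists>d. d \<noteq> 0 \<and> coprime d (qint p) \<and> qpoch (qvar^a) (qvar^b) m = Fract d 1"
proof -
  define d where "d = (\<Prod>i<m. (1 - monom (1::rat) (a + b*i)))"
  have pf: "(\<Prod>i<k. Fract (1 - monom (1::rat) (a + b*i)) 1) = Fract (\<Prod>i<k. (1 - monom (1::rat) (a + b*i))) 1" for k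
    by (induction k) (simp_all add: One_fract_def)
  have "qpoch (qvar^a) (qvar^b) m = Fract d 1"
    unfolding qpoch_qvar one_minus_qvar_pow d_def pf ..
  moreover have nz: "(1::rat poly) - monom 1 (a+b*i) \<noteq> 0" if "i < m" for i
  proof -
    have "a + b*i \<noteq> 0" using assms(2)[OF that] by simp
    then have "monom (1::rat) (a+b*i) \<noteq> 1" by (simp add: monom_eq_1_iff)
    then show ?thesis by simp
  qed
  then have "d \<noteq> 0" unfolding d_def by (simp add: prod_zero_iff)
  moreover have "coprime d (qint p)" unfolding d_def
  proof (rule prod_coprime_left)
    fix i assume "i \<in> {..<m}"
    then show "coprime (1 - monom 1 (a + b * i)) (qint p)"
      using assms(2)[of i] coprime_Xj_qint[OF assms(1)] by simp
  qed
  ultimately show ?thesis by blast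
qed

lemma good_div_qpoch:
  assumes "good p f" "prime p" "\<And>i. i < m \<Longrightarrow> 0 < a + b*i \<and> \<not> p dvd (a + b*i)"
  shows "good p (f / qpoch (qvar^a) (qvar^b) m)"
proof -
  obtain d where "d \<noteq> 0" "coprime d (qint p)" "qpoch (qvar^a) (qvar^b) m = Fract d 1"
    using den_fract[OF assms(2), of m a b] assms(3) by blast
  then show ?thesis using good_div[OF assms(1)] by simp
qed

lemma factor_diff:
  assumes p: "p = 2*n+1"
  shows "(1 - qvar * (qvar^2)^i)^2 - (1 - inverse ((qvar^2)^n) * (qvar^2)^i) * (1 - (qvar^2)^(n+1) * (qvar^2)^i)
       = Fract (qint p ^ 2) 1 * (Fract ((XX - 1)^2) 1 * qvar^(2*i+1) * inverse (qvar^p))"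
proof -
  define x where "x = qvar^(2*i+1)"
  define G where "G = qvar^p"
  have G0: "G \<noteq> 0" unfolding G_def using gen_nz[OF gen_qvar] by simp
  have e1: "qvar * (qvar^2)^i = x" unfolding x_def by (simp add: power_mult[symmetric])
  have e2: "inverse ((qvar^2)^n) * (qvar^2)^i = x * inverse G"
  proof -
    have "qvar^p = qvar * (qvar^2)^n" unfolding p by (simp add: power_mult[symmetric])
    then show ?thesis unfolding x_def G_def using gen_nz[OF gen_qvar]
      by (simp add: power_mult[symmetric] field_simps)
  qed
  have e3: "(qvar^2)^(n+1) * (qvar^2)^i = G * x"
    unfolding G_def x_def p by (simp add: power_mult[symmetric] power_add[symmetric] algebra_simps)
  have e4: "(G - 1)^2 = Fract (qint p ^ 2) 1 * Fract ((XX - 1)^2) 1"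
  proof -
    have "G - 1 = Fract (XX^p - 1) 1" unfolding G_def qvar_pow monom_X by (simp add: One_fract_def)
    then show ?thesis unfolding Xp_qint by (simp add: power2_eq_square ac_simps)
  qed
  have "(1 - x)^2 - (1 - x * inverse G) * (1 - G * x) = (G - 1)^2 * (x * inverse G)"
    using G0 by (simp add: field_simps power2_eq_square)
  then show ?thesis unfolding e1 e2 e3 e4 x_def[symmetric] G_def[symmetric] by (simp add: ac_simps)
qed

theorem theorem2p1:
  fixes p s :: nat
  assumes "prime p" and "odd p" and "s \<le> (p - 1) div 2"
  shows "qcong
    (\<Sum>k = 0..(p - 1) div 2.
        (qbinom (qvar ^ 2) (2 * k) k) ^ 2 * qbinom (qvar ^ 2) (2 * k) (k + s)
        * qvar ^ (2 * k)
        / ((qpoch (- (qvar ^ 2)) (qvar ^ 2) k) ^ 2 * (qpoch (- qvar) qvar (2 * k)) ^ 2))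
    (if s mod 2 = ((p - 1) div 2) mod 2 then
       (- 1) ^ s * qvar powi (int ((p - 1) div 2) - int s ^ 2)
       * (qbinom (qvar ^ 4) ((p - 1) div 2) ((p - 2 * s - 1) div 4)) ^ 2
       * qpoch (qvar ^ 2) (qvar ^ 2) ((p - 2 * s - 1) div 2)
       * qpoch (qvar ^ 2) (qvar ^ 2) ((p + 2 * s - 1) div 2)
       / (qpoch (qvar ^ 4) (qvar ^ 4) ((p - 1) div 2)) ^ 2
     else 0)
    (qint p) 2"
proof -
  define n where "n = (p - 1) div 2"
  have pn: "p = 2*n+1" using assms(2) unfolding n_def by presburger
  have p0: "0 < p" using pn by simp
  have sn: "s \<le> n" using assms(3) unfolding n_def .
  have "p \<noteq> 2" using assms(2) by auto
  then have p2: "2 < p" using prime_ge_2_nat[OF assms(1)] by linarith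
  define Q where "Q = qvar^2"
  define Ck where "Ck k = Q^k * qbinom Q (2*k) (k+s) / (qpoch (Q^2) (Q^2) k)^2" for k
  define Ok where "Ok k = qpoch qvar Q k" for k
  define Vk where "Vk k = qpoch (inverse (Q^n)) Q k * qpoch (Q^(n+1)) Q k" for k
  have a1: "(p - 2 * s - 1) div 4 = (n - s) div 2" "(p - 2 * s - 1) div 2 = n - s" "(p + 2 * s - 1) div 2 = n + s"
    using pn sn by simp_all
  have RHS: "(if s mod 2 = ((p - 1) div 2) mod 2 then
       (- 1) ^ s * qvar powi (int ((p - 1) div 2) - int s ^ 2)
       * (qbinom (qvar ^ 4) ((p - 1) div 2) ((p - 2 * s - 1) div 4)) ^ 2
       * qpoch (qvar ^ 2) (qvar ^ 2) ((p - 2 * s - 1) div 2)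
       * qpoch (qvar ^ 2) (qvar ^ 2) ((p + 2 * s - 1) div 2)
       / (qpoch (qvar ^ 4) (qvar ^ 4) ((p - 1) div 2)) ^ 2
     else 0) = Ssum Q n s"
    unfolding n_def[symmetric] a1 Q_def exact_identity[OF gen_qvar sn] Rhs_def ..
  have T: "(qbinom (qvar ^ 2) (2 * k) k) ^ 2 * qbinom (qvar ^ 2) (2 * k) (k + s)
        * qvar ^ (2 * k)
        / ((qpoch (- (qvar ^ 2)) (qvar ^ 2) k) ^ 2 * (qpoch (- qvar) qvar (2 * k)) ^ 2) = (Ok k)^2 * Ck k" for k
    unfolding Ok_def Ck_def Q_def by (rule Tk_form[OF gen_qvar])
  have F: "Fterm Q n s k = Vk k * Ck k" for k
    unfolding Fterm_def Aterm_def Vk_def Ck_def by (simp add: ac_simps)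
  have good_qvar: "good p qvar" using good_qvar_pow[of p 1] by simp
  have gQ: "good p (Q^j)" for j unfolding Q_def power_mult[symmetric] by (rule good_qvar_pow)
  have gQi: "good p (inverse (Q^j))" for j unfolding Q_def power_mult[symmetric] by (rule good_inv_qvar_pow[OF p0])
  have ndvd: "\<not> p dvd (c * (i+1))" if "c = 2 \<or> c = 4" "i + 1 < p" for c i
  proof
    assume "p dvd c * (i+1)"
    then have "p dvd c \<or> p dvd (i+1)" using assms(1) prime_dvd_mult_iff by blast
    moreover have "\<not> p dvd c"
    proof
      assume "p dvd c"
      then have "p dvd 2 * 2 \<or> p dvd 2" using that(1) by auto
      then have "p dvd 2" using assms(1) prime_dvd_mult_iff by blast
      then show False using p2 by (auto dest: dvd_imp_le)
    qed
    moreover have "\<not> p dvd (i+1)" using that(2) by (auto dest: dvd_imp_le)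
    ultimately show False by blast
  qed
  have gC: "good p (Ck k)" if "k \<le> n" for k
  proof -
    have qb: "good p (qbinom Q (2*k) (k+s))"
    proof (cases "k + s \<le> 2*k")
      case True
      have e: "qbinom Q (2*k) (k+s) = qpoch (qvar^(2*(2*k - (k+s) + 1))) (qvar^2) (k+s) / qpoch (qvar^2) (qvar^2) (k+s)"
      proof -
        have e0: "qbinom Q (2*k) (k+s) = qpoch (Q^(2*k - (k+s) + 1)) Q (k+s) / qpoch Q Q (k+s)"
          using True by (simp add: qbinom_def)
        have e1: "Q^(2*k-(k+s)+1) = qvar^(2*(2*k-(k+s)+1))" unfolding Q_def by (simp only: power_mult)
        show ?thesis unfolding e0 e1 unfolding Q_def ..
      qed
      show ?thesis unfolding e
      proof (rule good_div_qpoch[OF good_qpoch_qvar assms(1)])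
        fix i assume "i < k + s"
        then have "i + 1 < p" using sn that pn by simp
        then show "0 < 2 + 2*i \<and> \<not> p dvd (2 + 2*i)" using ndvd[of 2 i] by simp
      qed
    next
      case False then show ?thesis by (simp add: qbinom_zero good_0)
    qed
    have D: "qpoch (Q^2) (Q^2) k = qpoch (qvar^4) (qvar^4) k" unfolding Q_def by simp
    have cond: "0 < 4 + 4*i \<and> \<not> p dvd (4 + 4*i)" if "i < k" for i
    proof -
      have "i + 1 < p" using \<open>i < k\<close> \<open>k \<le> n\<close> pn by simp
      then show ?thesis using ndvd[of 4 i] by simp
    qed
    have "good p (Q^k * qbinom Q (2*k) (k+s) / qpoch (qvar^4) (qvar^4) k / qpoch (qvar^4) (qvar^4) k)"
      by (intro good_div_qpoch good_mult gQ qb assms(1) cond)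
    then show ?thesis unfolding Ck_def D by (simp add: power2_eq_square divide_divide_eq_left)
  qed
  have gOV: "inI p ((Ok k)^2 - Vk k)" for k
  proof -
    have eO: "(Ok k)^2 = (\<Prod>i<k. (1 - qvar * Q^i)^2)" unfolding Ok_def qpoch_def by (simp add: prod_power_distrib)
    have eV: "Vk k = (\<Prod>i<k. (1 - inverse (Q^n) * Q^i) * (1 - Q^(n+1) * Q^i))" unfolding Vk_def qpoch_def by (simp add: prod.distrib)
    show ?thesis unfolding eO eV
    proof (rule inI_prod)
      fix i
      show "inI p ((1 - qvar * Q^i)^2 - (1 - inverse (Q^n) * Q^i) * (1 - Q^(n+1) * Q^i))"
        unfolding Q_def factor_diff[OF pn] inI_def
        by (intro exI[of _ "Fract ((XX - 1)^2) 1 * qvar^(2*i+1) * inverse (qvar^p)"] conjI refl good_mult good_poly good_qvar_pow good_inv_qvar_pow p0)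
      show "good p ((1 - qvar * Q^i)^2)" by (intro good_pow good_diff good_1 good_mult good_qvar gQ)
      show "good p ((1 - inverse (Q^n) * Q^i) * (1 - Q^(n+1) * Q^i))" by (intro good_mult good_diff good_1 gQ gQi)
    qed
  qed
  have "inI p ((\<Sum>k = 0..n.
        (qbinom (qvar ^ 2) (2 * k) k) ^ 2 * qbinom (qvar ^ 2) (2 * k) (k + s)
        * qvar ^ (2 * k)
        / ((qpoch (- (qvar ^ 2)) (qvar ^ 2) k) ^ 2 * (qpoch (- qvar) qvar (2 * k)) ^ 2)) - Ssum Q n s)"
  proof -
    have "(\<Sum>k = 0..n.
        (qbinom (qvar ^ 2) (2 * k) k) ^ 2 * qbinom (qvar ^ 2) (2 * k) (k + s)
        * qvar ^ (2 * k)
        / ((qpoch (- (qvar ^ 2)) (qvar ^ 2) k) ^ 2 * (qpoch (- qvar) qvar (2 * k)) ^ 2)) - Ssum Q n s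
       = (\<Sum>k = 0..n. Ck k * ((Ok k)^2 - Vk k))"
      unfolding T Ssum_def F sum_subtractf[symmetric] by (simp add: algebra_simps)
    also have "inI p \<dots>" by (rule inI_sum) (use gC gOV inI_mult in auto)
    finally show ?thesis .
  qed
  then show ?thesis unfolding RHS unfolding n_def[symmetric] using qcong_of_inI p0 by blast
qed

end
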